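(* Let $A$ be the set of $\alpha=(\alpha_0,\dots,\alpha_5)\in\mathbb{R}^6$ with $\alpha_0+\alpha_1=0$ and $\alpha_2+\alpha_3+\alpha_4+\alpha_5=1$. Let $G$ be the group acting on $A$ generated by the shifts \begin{align*} \sigma_1(\alpha)&=(\alpha_0+1,\alpha_1-1,\alpha_2,\alpha_3,\alpha_4,\alpha_5),\\ \sigma_2(\alpha)&=(\alpha_0,\alpha_1,\alpha_2+1,\alpha_3,\alpha_4,\alpha_5-1),\\ \sigma_3(\alpha)&=(\alpha_0,\alpha_1,\alpha_2,\alpha_3+1,\alpha_4,\alpha_5-1),\\ \sigma_4(\alpha)&=(\alpha_0,\alpha_1,\alpha_2,\alpha_3,\alpha_4+1,\alpha_5-1),\\ \sigma_5(\alpha)&=(\alpha_0+\tfrac12,\alpha_1-\tfrac12,\alpha_2+\tfrac12,\alpha_3+\tfrac12,\alpha_4-\tfrac12,\alpha_5-\tfrac12), \end{align*} by the permutations of $(\alpha_2,\alpha_3,\alpha_4,\alpha_5)$, and by the permutation exchanging $\alpha_0$ and $\alpha_1$. Then a fundamental domain for this action is the polytope \[ -\tfrac12\le\alpha_0\le0,\quad\alpha_1=-\alpha_0,\quad\alpha_2\le\alpha_3\le\alpha_4\le\alpha_5,\quad\alpha_4+\alpha_5\le1,\quad\alpha_2+\alpha_3+\alpha_4+\alpha_5=1. \] *)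

theory Defs
  imports "HOL-Analysis.Analysis" "HOL-Combinatorics.Permutations"
begin

definition setA :: "(real^6) set" where
  "setA = {a. a$0 + a$1 = 0 \<and> a$2 + a$3 + a$4 + a$5 = 1}"

definition sigma1 :: "real^6 \<Rightarrow> real^6" where
  "sigma1 a = (\<chi> i. if i = 0 then a$i + 1 else if i = 1 then a$i - 1 else a$i)"

definition sigma2 :: "real^6 \<Rightarrow> real^6" where
  "sigma2 a = (\<chi> i. if i = 2 then a$i + 1 else if i = 5 then a$i - 1 else a$i)"

definition sigma3 :: "real^6 \<Rightarrow> real^6" where
  "sigma3 a = (\<chi> i. if i = 3 then a$i + 1 else if i = 5 then a$i - 1 else a$i)"

definition sigma4 :: "real^6 \<Rightarrow> real^6" where
  "sigma4 a = (\<chi> i. if i = 4 then a$i + 1 else if i = 5 then a$i - 1 else a$i)"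

definition sigma5 :: "real^6 \<Rightarrow> real^6" where
  "sigma5 a = (\<chi> i. if i = 0 \<or> i = 2 \<or> i = 3 then a$i + 1/2 else a$i - 1/2)"

definition perm_coords :: "(6 \<Rightarrow> 6) \<Rightarrow> real^6 \<Rightarrow> real^6" where
  "perm_coords p a = (\<chi> i. a $ p i)"

definition swap01 :: "real^6 \<Rightarrow> real^6" where
  "swap01 a = (\<chi> i. if i = 0 then a$1 else if i = 1 then a$0 else a$i)"

definition generators :: "(real^6 \<Rightarrow> real^6) set" where
  "generators = {sigma1, sigma2, sigma3, sigma4, sigma5, swap01}
      \<union> {perm_coords p | p. p permutes {2,3,4,5}}"

text \<open>The group generated by the generators (all are bijections of R^6 preserving A),
  under composition.\<close>
inductive_set groupG :: "(real^6 \<Rightarrow> real^6) set" where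
  G_id: "id \<in> groupG"
| G_gen: "g \<in> groupG \<Longrightarrow> s \<in> generators \<Longrightarrow> s \<circ> g \<in> groupG"
| G_inv: "g \<in> groupG \<Longrightarrow> s \<in> generators \<Longrightarrow> inv s \<circ> g \<in> groupG"

definition interior_in :: "(real^6) set \<Rightarrow> (real^6) set \<Rightarrow> (real^6) set" where
  "interior_in X D = {x \<in> D. \<exists>e>0. ball x e \<inter> X \<subseteq> D}"

definition fundamental_domain ::
  "(real^6 \<Rightarrow> real^6) set \<Rightarrow> (real^6) set \<Rightarrow> (real^6) set \<Rightarrow> bool" where
  "fundamental_domain Gr X D \<longleftrightarrow>
     D \<subseteq> X \<and>
     (\<forall>x\<in>X. \<exists>g\<in>Gr. g x \<in> D) \<and>
     (\<forall>g\<in>Gr. \<forall>x\<in>interior_in X D. g x \<in> interior_in X D \<longrightarrow> g x = x)"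

definition polytopeD :: "(real^6) set" where
  "polytopeD = {a. -1/2 \<le> a$0 \<and> a$0 \<le> 0 \<and> a$1 = - a$0 \<and>
      a$2 \<le> a$3 \<and> a$3 \<le> a$4 \<and> a$4 \<le> a$5 \<and> a$4 + a$5 \<le> 1 \<and>
      a$2 + a$3 + a$4 + a$5 = 1}"

end

theory Submission imports Defs begin

lemma ex6: fixes i::6 shows "i = 0 \<or> i = 1 \<or> i = 2 \<or> i = 3 \<or> i = 4 \<or> i = 5"
proof (induct i)
  case (of_int z) then have "z=0 \<or> z=1 \<or> z=2 \<or> z=3 \<or> z=4 \<or> z=5" by fastforce
  then show ?case by auto
qed

lemma vec6_eq: "(x::real^6) = y \<longleftrightarrow> x$0=y$0 \<and> x$1=y$1 \<and> x$2=y$2 \<and> x$3=y$3 \<and> x$4=y$4 \<and> x$5=y$5"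
proof
  assume h: "x$0=y$0 \<and> x$1=y$1 \<and> x$2=y$2 \<and> x$3=y$3 \<and> x$4=y$4 \<and> x$5=y$5"
  show "x = y" unfolding vec_eq_iff
  proof
    fix i :: 6 show "x$i = y$i" using ex6[of i] h by auto
  qed
qed simp

lemma G_comp: "f \<in> groupG \<Longrightarrow> g \<in> groupG \<Longrightarrow> f \<circ> g \<in> groupG"
proof (induction f rule: groupG.induct)
  case G_id then show ?case by simp
next
  case (G_gen f s) then show ?case by (metis comp_assoc groupG.G_gen)
next
  case (G_inv f s) then show ?case by (metis comp_assoc groupG.G_inv)
qed

lemma gen_in: "s \<in> generators \<Longrightarrow> s \<in> groupG"
  using groupG.G_gen[OF groupG.G_id] by simp

lemma inv_in: "s \<in> generators \<Longrightarrow> inv s \<in> groupG"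
  using groupG.G_inv[OF groupG.G_id] by simp

definition tr :: "real^6 \<Rightarrow> real^6 \<Rightarrow> real^6" where "tr d x = x + d"

lemma tr_comp: "tr d \<circ> tr e = tr (d + e)"
  by (auto simp: tr_def fun_eq_iff algebra_simps)

lemma tr_inv: "inv (tr d) = tr (- d)"
  by (rule inv_equality) (auto simp: tr_def)

definition "Lat = {d. tr d \<in> groupG}"

lemma Lat_add: "d \<in> Lat \<Longrightarrow> e \<in> Lat \<Longrightarrow> d + e \<in> Lat"
  unfolding Lat_def using G_comp tr_comp by fastforce

lemma tr0: "tr 0 = id" by (auto simp: tr_def)

lemma Lat_gen: "tr d \<in> generators \<Longrightarrow> d \<in> Lat \<and> -d \<in> Lat"
  unfolding Lat_def using gen_in[of "tr d"] inv_in[of "tr d"] tr_inv[of d] by simp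

lemma Lat_nat: "d \<in> Lat \<Longrightarrow> of_nat k *\<^sub>R d \<in> Lat"
proof (induction k)
  case 0 then show ?case using tr0 groupG.G_id by (simp add: Lat_def)
next
  case (Suc k) then show ?case using Lat_add[of "of_nat k *\<^sub>R d" d] by (simp add: algebra_simps)
qed

lemma Lat_int: assumes "d \<in> Lat" "-d \<in> Lat" shows "of_int n *\<^sub>R d \<in> Lat"
proof (cases n rule: int_cases)
  case (nonneg k) then show ?thesis using Lat_nat[OF assms(1), of k] by simp
next
  case (neg k)
  from assms have "of_nat (Suc k) *\<^sub>R (-d) \<in> Lat" using Lat_nat by blast
  moreover have "real_of_int n *\<^sub>R d = real (Suc k) *\<^sub>R (-d)" proof -
    have "real_of_int n = - real (Suc k)" using neg by simp
    then show ?thesis by (simp only: scaleR_minus_left scaleR_minus_right)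
  qed
  ultimately show ?thesis by simp
qed

definition d1 :: "real^6" where "d1 = (\<chi> i. if i = 0 then 1 else if i = 1 then -1 else 0)"
definition d3 :: "real^6" where "d3 = (\<chi> i. if i = 3 then 1 else if i = 5 then -1 else 0)"
definition d4 :: "real^6" where "d4 = (\<chi> i. if i = 4 then 1 else if i = 5 then -1 else 0)"
definition d5 :: "real^6" where "d5 = (\<chi> i. if i = 0 \<or> i = 2 \<or> i = 3 then 1/2 else -1/2)"

lemma sig_tr: "sigma1 = tr d1" "sigma3 = tr d3" "sigma4 = tr d4" "sigma5 = tr d5"
  by (simp_all add: fun_eq_iff vec6_eq tr_def sigma1_def sigma3_def sigma4_def sigma5_def
     d1_def d3_def d4_def d5_def)

lemma Lat_basic: "d1 \<in> Lat" "-d1 \<in> Lat" "d3 \<in> Lat" "-d3 \<in> Lat" "d4 \<in> Lat" "-d4 \<in> Lat" "d5 \<in> Lat" "-d5 \<in> Lat"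
proof -
  have "tr d1 \<in> generators" "tr d3 \<in> generators" "tr d4 \<in> generators" "tr d5 \<in> generators"
    unfolding sig_tr[symmetric] generators_def by blast+
  then show "d1 \<in> Lat" "-d1 \<in> Lat" "d3 \<in> Lat" "-d3 \<in> Lat" "d4 \<in> Lat" "-d4 \<in> Lat" "d5 \<in> Lat" "-d5 \<in> Lat"
    using Lat_gen by blast+
qed

definition cw :: "6 \<Rightarrow> 6 \<Rightarrow> real^6 \<Rightarrow> real^6" where
  "cw i j y = (\<chi> k. if k = i then min (y$i) (y$j) else if k = j then max (y$i) (y$j) else y$k)"

lemma condswap:
  assumes "i \<in> {2,3,4,5}" "j \<in> {2,3,4,5}" "i \<noteq> j"
  shows "\<exists>g\<in>groupG. g y = cw i j y"
proof (cases "y$i \<le> y$j")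
  case True then show ?thesis
    by (intro bexI[of _ id]) (auto intro: groupG.G_id simp: vec_eq_iff cw_def min_def max_def)
next
  case False
  let ?p = "Transposition.transpose i j"
  have "?p permutes {2,3,4,5}" using assms by (intro permutes_swap_id)
  then have "perm_coords ?p \<in> groupG" by (intro gen_in) (auto simp: generators_def)
  then show ?thesis using False assms(3)
    by (intro bexI[of _ "perm_coords ?p"])
       (auto simp: vec_eq_iff cw_def perm_coords_def Transposition.transpose_def min_def max_def)
qed

definition PS :: "real^6 \<Rightarrow> bool" where
  "PS y \<longleftrightarrow> (\<forall>i\<in>{2,3,4,5}. \<forall>j\<in>{2,3,4,5}. i \<noteq> j \<longrightarrow> 0 \<le> y$i + y$j)"

lemma PS_cw: assumes "PS y" "i \<in> {2,3,4,5}" "j \<in> {2,3,4,5}" "i \<noteq> j" shows "PS (cw i j y)"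
  unfolding PS_def
proof (intro ballI impI)
  fix a b :: 6 assume ab: "a \<in> {2,3,4,5}" "b \<in> {2,3,4,5}" "a \<noteq> b"
  have p: "\<And>u v. u \<in> {2,3,4,5} \<Longrightarrow> v \<in> {2,3,4,5} \<Longrightarrow> u \<noteq> v \<Longrightarrow> 0 \<le> y$u + y$v"
    using assms(1) unfolding PS_def by blast
  show "0 \<le> cw i j y $ a + cw i j y $ b"
    unfolding cw_def vec_lambda_beta min_def max_def
    using p ab assms(2-4) by (auto intro: p)
qed

lemma sort4: "\<exists>g\<in>groupG. (g y)$0 = y$0 \<and> (g y)$1 = y$1 \<and> (g y)$2 \<le> (g y)$3 \<and> (g y)$3 \<le> (g y)$4 \<and>
   (g y)$4 \<le> (g y)$5 \<and> (g y)$2 + (g y)$3 + (g y)$4 + (g y)$5 = y$2+y$3+y$4+y$5 \<and>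
   (PS y \<longrightarrow> PS (g y))"
proof -
  define y1 where "y1 = cw 2 3 y"
  define y2 where "y2 = cw 4 5 y1"
  define y3 where "y3 = cw 2 4 y2"
  define y4 where "y4 = cw 3 5 y3"
  define y5 where "y5 = cw 3 4 y4"
  obtain g1 where g1: "g1 \<in> groupG" "g1 y = y1" using condswap[of 2 3 y] y1_def by auto
  obtain g2 where g2: "g2 \<in> groupG" "g2 y1 = y2" using condswap[of 4 5 y1] y2_def by auto
  obtain g3 where g3: "g3 \<in> groupG" "g3 y2 = y3" using condswap[of 2 4 y2] y3_def by auto
  obtain g4 where g4: "g4 \<in> groupG" "g4 y3 = y4" using condswap[of 3 5 y3] y4_def by auto
  obtain g5 where g5: "g5 \<in> groupG" "g5 y4 = y5" using condswap[of 3 4 y4] y5_def by auto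
  let ?g = "g5 \<circ> g4 \<circ> g3 \<circ> g2 \<circ> g1"
  have gG: "?g \<in> groupG" using g1 g2 g3 g4 g5 G_comp by metis
  have gy: "?g y = y5" using g1 g2 g3 g4 g5 by simp
  have ps: "PS y \<longrightarrow> PS y5"
    unfolding y5_def y4_def y3_def y2_def y1_def by (auto intro!: PS_cw)
  have "y5$0 = y$0 \<and> y5$1 = y$1 \<and> y5$2 \<le> y5$3 \<and> y5$3 \<le> y5$4 \<and> y5$4 \<le> y5$5 \<and>
     y5$2 + y5$3 + y5$4 + y5$5 = y$2+y$3+y$4+y$5"
    unfolding y5_def y4_def y3_def y2_def y1_def by (simp add: cw_def min_def max_def)
  then show ?thesis using gG gy ps by (intro bexI[of _ ?g]) auto
qed

lemma Lat_intb: "of_int n *\<^sub>R d1 \<in> Lat" "of_int n *\<^sub>R d3 \<in> Lat" "of_int n *\<^sub>R d4 \<in> Lat" "of_int n *\<^sub>R d5 \<in> Lat"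
  using Lat_int Lat_basic by blast+

lemma cover: assumes x: "x \<in> setA" shows "\<exists>g\<in>groupG. g x \<in> polytopeD"
proof -
  define np where "np = \<lfloor>x$2 + x$3\<rfloor>"
  define nq where "nq = \<lfloor>x$2 + x$4\<rfloor>"
  define nr where "nr = \<lfloor>x$2 + x$5\<rfloor>"
  define dd where "dd = of_int (-np) *\<^sub>R d5 + of_int (-nq) *\<^sub>R d5 + of_int (-nq) *\<^sub>R d4 + of_int nq *\<^sub>R d3
     + of_int (-nr) *\<^sub>R d5 + of_int nr *\<^sub>R d3"
  have ddL: "dd \<in> Lat" unfolding dd_def by (intro Lat_add Lat_intb)
  define x1 where "x1 = tr dd x"
  have x0: "x$0 + x$1 = 0" "x$2 + x$3 + x$4 + x$5 = 1" using x by (auto simp: setA_def)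
  have c1: "x1$0 = x$0 - (np+nq+nr)/2" "x1$1 = x$1 + (np+nq+nr)/2"
     "x1$2 = x$2 - (np+nq+nr)/2" "x1$3 = x$3 - (np-nq-nr)/2"
     "x1$4 = x$4 - (-np+nq-nr)/2" "x1$5 = x$5 - (-np-nq+nr)/2"
    unfolding x1_def tr_def dd_def by (simp_all add: d3_def d4_def d5_def field_simps)
  have fl: "of_int np \<le> x$2 + x$3" "x$2 + x$3 < of_int np + 1"
     "of_int nq \<le> x$2 + x$4" "x$2 + x$4 < of_int nq + 1"
     "of_int nr \<le> x$2 + x$5" "x$2 + x$5 < of_int nr + 1"
    unfolding np_def nq_def nr_def by linarith+
  have "0 \<le> x1$2 + x1$3" "0 \<le> x1$2 + x1$4" "0 \<le> x1$2 + x1$5" "0 \<le> x1$3 + x1$4"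
     "0 \<le> x1$3 + x1$5" "0 \<le> x1$4 + x1$5" using fl x0 unfolding c1 by (simp_all add: field_simps)
  then have ps1: "PS x1" unfolding PS_def by (auto simp: add.commute)
  have s1: "x1$0 + x1$1 = 0" "x1$2 + x1$3 + x1$4 + x1$5 = 1" using x0 unfolding c1 by (simp_all add: field_simps)
  obtain g where g: "g \<in> groupG" "(g x1)$0 = x1$0" "(g x1)$1 = x1$1" "(g x1)$2 \<le> (g x1)$3"
     "(g x1)$3 \<le> (g x1)$4" "(g x1)$4 \<le> (g x1)$5"
     "(g x1)$2 + (g x1)$3 + (g x1)$4 + (g x1)$5 = x1$2+x1$3+x1$4+x1$5" "PS (g x1)"
    using sort4[of x1] ps1 by blast
  define x2 where "x2 = g x1"
  have p2: "0 \<le> x2$2 + x2$3" using g(8) unfolding x2_def PS_def by auto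
  define n where "n = \<lfloor>1/2 - x2$0\<rfloor>"
  have nb: "of_int n \<le> 1/2 - x2$0" "1/2 - x2$0 < of_int n + 1" unfolding n_def by linarith+
  define x3 where "x3 = tr (of_int n *\<^sub>R d1) x2"
  have c3a: "x3$0 = x2$0 + n" "x3$1 = x2$1 - n"
    unfolding x3_def tr_def by (auto simp: d1_def)
  have c3: "x3$i = x2$i" if "i \<in> {2,3,4,5}" for i
    using that unfolding x3_def tr_def by (auto simp: d1_def)
  have g3: "tr (of_int n *\<^sub>R d1) \<circ> g \<circ> tr dd \<in> groupG"
    using G_comp g(1) ddL Lat_intb(1)[of n] unfolding Lat_def by blast
  have e3: "(tr (of_int n *\<^sub>R d1) \<circ> g \<circ> tr dd) x = x3" unfolding x3_def x2_def x1_def by simp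
  have base: "x3$2 \<le> x3$3 \<and> x3$3 \<le> x3$4 \<and> x3$4 \<le> x3$5 \<and> x3$4 + x3$5 \<le> 1 \<and> x3$2 + x3$3 + x3$4 + x3$5 = 1"
    using c3[of 2] c3[of 3] c3[of 4] c3[of 5] g p2 s1 unfolding x2_def by auto
  have t3: "x3$1 = - x3$0" "-1/2 < x3$0" "x3$0 \<le> 1/2"
    using c3a nb g s1 unfolding x2_def by auto
  show ?thesis
  proof (cases "x3$0 \<le> 0")
    case True
    then have "x3 \<in> polytopeD" using base t3 unfolding polytopeD_def by auto
    then show ?thesis using g3 e3 by (metis (no_types, lifting))
  next
    case False
    have sw: "swap01 \<in> groupG" by (intro gen_in) (simp add: generators_def)
    have "swap01 x3 \<in> polytopeD" using base t3 False unfolding polytopeD_def swap01_def by auto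
    moreover have "swap01 \<circ> (tr (of_int n *\<^sub>R d1) \<circ> g \<circ> tr dd) \<in> groupG" using G_comp sw g3 by blast
    ultimately show ?thesis using e3 by (intro bexI) auto
  qed
qed

definition good :: "(real^6 \<Rightarrow> real^6) \<Rightarrow> bool" where
  "good g \<longleftrightarrow> (\<exists>(e::real) (m::int) (w::6\<Rightarrow>6) (v::6\<Rightarrow>real). (e = 1 \<or> e = -1) \<and> w permutes {2,3,4,5} \<and>
     (\<forall>i\<in>{2,3,4,5}. v i - m/2 \<in> \<int>) \<and> v 2 + v 3 + v 4 + v 5 = 0 \<and>
     (\<forall>x\<in>setA. (g x)$0 = e * x$0 + m/2 \<and> (g x)$1 = -(e * x$0 + m/2) \<and>
        (\<forall>i\<in>{2,3,4,5}. (g x)$i = x$(w i) + v i)))"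

lemma good_id: "good id"
  unfolding good_def
  by (rule exI[of _ 1], rule exI[of _ 0], rule exI[of _ id], rule exI[of _ "\<lambda>_. 0"])
     (auto simp: permutes_id setA_def)

lemma good_tr:
  fixes k :: int
  assumes "good g" "d$0 + d$1 = 0" "d$0 = k/2" "\<forall>i\<in>{2,3,4,5}. d$i - k/2 \<in> \<int>" "d$2+d$3+d$4+d$5 = 0"
  shows "good (tr d \<circ> g)"
proof -
  from assms(1) obtain e and m :: int and w v where H: "(e = 1 \<or> e = -1)" "w permutes {2,3,4,5}"
     "\<forall>i\<in>{2,3,4,5}. v i - m/2 \<in> \<int>" "v 2 + v 3 + v 4 + v 5 = 0"
     "\<forall>x\<in>setA. (g x)$0 = e * x$0 + m/2 \<and> (g x)$1 = -(e * x$0 + m/2) \<and>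
        (\<forall>i\<in>{2,3,4,5}. (g x)$i = x$(w i) + v i)"
    unfolding good_def by blast
  have par: "\<forall>i\<in>{2,3,4,5}. (v i + d$i) - real_of_int (m+k)/2 \<in> \<int>"
  proof
    fix i :: 6 assume i: "i \<in> {2,3,4,5}"
    have "(v i + d$i) - real_of_int (m+k)/2 = (v i - m/2) + (d$i - k/2)" by (simp add: field_simps)
    then show "(v i + d$i) - real_of_int (m+k)/2 \<in> \<int>" using H(3) assms(4) i by (metis Ints_add)
  qed
  show ?thesis unfolding good_def
    apply (rule exI[of _ e], rule exI[of _ "m+k"], rule exI[of _ w], rule exI[of _ "\<lambda>i. v i + d$i"])
  proof (intro conjI)
    show "v 2 + d $ 2 + (v 3 + d $ 3) + (v 4 + d $ 4) + (v 5 + d $ 5) = 0" using H(4) assms(5) by simp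
    show "\<forall>x\<in>setA. (tr d \<circ> g) x $ 0 = e * x $ 0 + real_of_int (m + k) / 2 \<and>
        (tr d \<circ> g) x $ 1 = - (e * x $ 0 + real_of_int (m + k) / 2) \<and>
        (\<forall>i\<in>{2, 3, 4, 5}. (tr d \<circ> g) x $ i = x $ w i + (v i + d $ i))"
    proof
      fix x assume x: "x \<in> setA"
      have "(g x)$0 = e * x$0 + m/2" "(g x)$1 = -(e * x$0 + m/2)"
        "\<forall>i\<in>{2,3,4,5}. (g x)$i = x$(w i) + v i" using H(5) x by auto
      then show "(tr d \<circ> g) x $ 0 = e * x $ 0 + real_of_int (m + k) / 2 \<and>
        (tr d \<circ> g) x $ 1 = - (e * x $ 0 + real_of_int (m + k) / 2) \<and>
        (\<forall>i\<in>{2, 3, 4, 5}. (tr d \<circ> g) x $ i = x $ w i + (v i + d $ i))"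
        using assms(2,3) unfolding tr_def by (simp add: field_simps)
    qed
  qed (use H(1,2) par in auto)
qed

lemma good_swap: assumes "good g" shows "good (swap01 \<circ> g)"
proof -
  from assms(1) obtain e and m :: int and w v where H: "(e = 1 \<or> e = -1)" "w permutes {2,3,4,5}"
     "\<forall>i\<in>{2,3,4,5}. v i - m/2 \<in> \<int>" "v 2 + v 3 + v 4 + v 5 = 0"
     "\<forall>x\<in>setA. (g x)$0 = e * x$0 + m/2 \<and> (g x)$1 = -(e * x$0 + m/2) \<and>
        (\<forall>i\<in>{2,3,4,5}. (g x)$i = x$(w i) + v i)"
    unfolding good_def by blast
  have par: "\<forall>i\<in>{2,3,4,5}. v i - real_of_int (-m)/2 \<in> \<int>"
  proof
    fix i :: 6 assume i: "i \<in> {2,3,4,5}"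
    have "v i - real_of_int (-m)/2 = (v i - m/2) + of_int m" by (simp add: field_simps)
    then show "v i - real_of_int (-m)/2 \<in> \<int>" using H(3) i by (metis Ints_add Ints_of_int)
  qed
  show ?thesis unfolding good_def
    apply (rule exI[of _ "-e"], rule exI[of _ "-m"], rule exI[of _ w], rule exI[of _ v])
  proof (intro conjI)
    show "\<forall>x\<in>setA. (swap01 \<circ> g) x $ 0 = - e * x $ 0 + real_of_int (- m) / 2 \<and>
        (swap01 \<circ> g) x $ 1 = - (- e * x $ 0 + real_of_int (- m) / 2) \<and>
        (\<forall>i\<in>{2, 3, 4, 5}. (swap01 \<circ> g) x $ i = x $ w i + v i)"
    proof
      fix x assume x: "x \<in> setA"
      have "(g x)$0 = e * x$0 + m/2" "(g x)$1 = -(e * x$0 + m/2)"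
        "\<forall>i\<in>{2,3,4,5}. (g x)$i = x$(w i) + v i" using H(5) x by auto
      then show "(swap01 \<circ> g) x $ 0 = - e * x $ 0 + real_of_int (- m) / 2 \<and>
        (swap01 \<circ> g) x $ 1 = - (- e * x $ 0 + real_of_int (- m) / 2) \<and>
        (\<forall>i\<in>{2, 3, 4, 5}. (swap01 \<circ> g) x $ i = x $ w i + v i)"
        unfolding swap01_def by simp
    qed
  qed (use H(1,2,4) par in auto)
qed

lemma good_perm: assumes "good g" "p permutes {2,3,4,5}" shows "good (perm_coords p \<circ> g)"
proof -
  from assms(1) obtain e and m :: int and w v where H: "(e = 1 \<or> e = -1)" "w permutes {2,3,4,5}"
     "\<forall>i\<in>{2,3,4,5}. v i - m/2 \<in> \<int>" "v 2 + v 3 + v 4 + v 5 = 0"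
     "\<forall>x\<in>setA. (g x)$0 = e * x$0 + m/2 \<and> (g x)$1 = -(e * x$0 + m/2) \<and>
        (\<forall>i\<in>{2,3,4,5}. (g x)$i = x$(w i) + v i)"
    unfolding good_def by blast
  have img: "\<And>i. i \<in> {2,3,4,5} \<Longrightarrow> p i \<in> {2,3,4,5}" using permutes_in_image[OF assms(2)] by simp
  have p01: "p 0 = 0" "p 1 = 1" by (rule permutes_not_in[OF assms(2)], simp)+
  have sv: "v (p 2) + v (p 3) + v (p 4) + v (p 5) = 0"
  proof -
    have "sum v {2,3,4,5} = sum (v \<circ> p) {2,3,4,5}" by (rule sum.permute[OF assms(2)])
    then show ?thesis using H(4) by simp
  qed
  show ?thesis unfolding good_def
    apply (rule exI[of _ e], rule exI[of _ m], rule exI[of _ "w \<circ> p"], rule exI[of _ "v \<circ> p"])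
  proof (intro conjI)
    show "\<forall>x\<in>setA. (perm_coords p \<circ> g) x $ 0 = e * x $ 0 + real_of_int m / 2 \<and>
        (perm_coords p \<circ> g) x $ 1 = - (e * x $ 0 + real_of_int m / 2) \<and>
        (\<forall>i\<in>{2, 3, 4, 5}. (perm_coords p \<circ> g) x $ i = x $ (w \<circ> p) i + (v \<circ> p) i)"
    proof
      fix x assume x: "x \<in> setA"
      have h: "(g x)$0 = e * x$0 + m/2" "(g x)$1 = -(e * x$0 + m/2)"
        "\<forall>i\<in>{2,3,4,5}. (g x)$i = x$(w i) + v i" using H(5) x by auto
      have "\<forall>i\<in>{2, 3, 4, 5}. (perm_coords p \<circ> g) x $ i = x $ (w \<circ> p) i + (v \<circ> p) i"
      proof
        fix i :: 6 assume "i \<in> {2,3,4,5}"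
        then have "p i \<in> {2,3,4,5}" by (rule img)
        then show "(perm_coords p \<circ> g) x $ i = x $ (w \<circ> p) i + (v \<circ> p) i"
          using bspec[OF h(3) \<open>p i \<in> {2,3,4,5}\<close>] unfolding perm_coords_def by simp
      qed
      then show "(perm_coords p \<circ> g) x $ 0 = e * x $ 0 + real_of_int m / 2 \<and>
        (perm_coords p \<circ> g) x $ 1 = - (e * x $ 0 + real_of_int m / 2) \<and>
        (\<forall>i\<in>{2, 3, 4, 5}. (perm_coords p \<circ> g) x $ i = x $ (w \<circ> p) i + (v \<circ> p) i)"
        using h(1,2) p01 unfolding perm_coords_def by simp
    qed
    show "\<forall>i\<in>{2, 3, 4, 5}. (v \<circ> p) i - real_of_int m / 2 \<in> \<int>"
    proof
      fix i :: 6 assume "i \<in> {2,3,4,5}"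
      then have "p i \<in> {2,3,4,5}" by (rule img)
      then show "(v \<circ> p) i - real_of_int m / 2 \<in> \<int>" using bspec[OF H(3)] by simp
    qed
    show "e = 1 \<or> e = -1" by (rule H(1))
    show "w \<circ> p permutes {2,3,4,5}" by (rule permutes_compose[OF assms(2) H(2)])
    show "(v \<circ> p) 2 + (v \<circ> p) 3 + (v \<circ> p) 4 + (v \<circ> p) 5 = 0" using sv by simp
  qed
qed

definition d2 :: "real^6" where "d2 = (\<chi> i. if i = 2 then 1 else if i = 5 then -1 else 0)"

lemma sig2_tr: "sigma2 = tr d2"
  by (simp add: fun_eq_iff vec6_eq tr_def sigma2_def d2_def)

lemma good_trs:
  assumes "good g"
  shows "good (tr d1 \<circ> g)" "good (tr (-d1) \<circ> g)" "good (tr d2 \<circ> g)" "good (tr (-d2) \<circ> g)"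
    "good (tr d3 \<circ> g)" "good (tr (-d3) \<circ> g)" "good (tr d4 \<circ> g)" "good (tr (-d4) \<circ> g)"
    "good (tr d5 \<circ> g)" "good (tr (-d5) \<circ> g)"
  apply (rule good_tr[OF assms, of _ 2]; simp add: d1_def)
  apply (rule good_tr[OF assms, of _ "-2"]; simp add: d1_def)
  apply (rule good_tr[OF assms, of _ 0]; simp add: d2_def)
  apply (rule good_tr[OF assms, of _ 0]; simp add: d2_def)
  apply (rule good_tr[OF assms, of _ 0]; simp add: d3_def)
  apply (rule good_tr[OF assms, of _ 0]; simp add: d3_def)
  apply (rule good_tr[OF assms, of _ 0]; simp add: d4_def)
  apply (rule good_tr[OF assms, of _ 0]; simp add: d4_def)
  apply (rule good_tr[OF assms, of _ 1]; simp add: d5_def)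
  apply (rule good_tr[OF assms, of _ "-1"]; simp add: d5_def)
  done

lemma swap_swap: "swap01 (swap01 x) = x"
  unfolding vec_eq_iff swap01_def by simp

lemma inv_swap: "inv swap01 = swap01"
  by (rule inv_equality) (rule swap_swap)+

lemma inv_perm: assumes "p permutes S" shows "inv (perm_coords p) = perm_coords (inv p)"
proof (rule inv_equality)
  fix x show "perm_coords (inv p) (perm_coords p x) = x"
    unfolding perm_coords_def vec_eq_iff using permutes_inverses[OF assms] by simp
next
  fix x show "perm_coords p (perm_coords (inv p) x) = x"
    unfolding perm_coords_def vec_eq_iff using permutes_inverses[OF assms] by simp
qed

lemma good_G: "g \<in> groupG \<Longrightarrow> good g"
proof (induction g rule: groupG.induct)
  case G_id then show ?case by (rule good_id)
next
  case (G_gen g s)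
  then show ?case unfolding generators_def
    using good_trs[OF G_gen.IH] sig_tr sig2_tr good_swap[OF G_gen.IH] good_perm[OF G_gen.IH] by (auto simp: comp_def)
next
  case (G_inv g s)
  then show ?case unfolding generators_def
    using good_trs[OF G_inv.IH] good_swap[OF G_inv.IH] inv_swap
       good_perm[OF G_inv.IH permutes_inv] inv_perm by (auto simp: comp_def sig_tr sig2_tr tr_inv)
qed

lemma pert:
  fixes i j :: 6
  assumes xi: "x \<in> interior_in setA polytopeD"
    and ij: "(i = 0 \<and> j = 1) \<or> (i = 1 \<and> j = 0) \<or> (i \<in> {2,3,4,5} \<and> j \<in> {2,3,4,5})"
  shows "\<exists>\<delta>>0. x + \<delta> *\<^sub>R (axis i 1 - axis j 1) \<in> polytopeD"
proof -
  from xi obtain e where e: "e > 0" "ball x e \<inter> setA \<subseteq> polytopeD" and xD: "x \<in> polytopeD"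
    unfolding interior_in_def by blast
  define \<delta> where "\<delta> = e/4"
  define y where "y = x + \<delta> *\<^sub>R (axis i 1 - axis j 1)"
  have "norm (axis i (1::real) - axis j 1) \<le> norm (axis i (1::real)) + norm (axis j (1::real))"
    by (rule norm_triangle_ineq4)
  then have "norm (\<delta> *\<^sub>R (axis i 1 - axis j (1::real))) \<le> \<delta> * 2"
    using e by (simp add: \<delta>_def)
  then have "y \<in> ball x e" using e unfolding y_def \<delta>_def by (simp add: dist_norm)
  moreover have "y \<in> setA"
  proof -
    have xA: "x$0 + x$1 = 0" "x$2 + x$3 + x$4 + x$5 = 1" using xD unfolding polytopeD_def by auto
    show ?thesis using ij xA unfolding y_def setA_def axis_def by auto
  qed
  ultimately have "y \<in> polytopeD" using e by blast
  moreover have "\<delta> > 0" using e \<delta>_def by simp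
  ultimately show ?thesis unfolding y_def by blast
qed

lemma strict:
  assumes xi: "x \<in> interior_in setA polytopeD"
  shows "-1/2 < x$0 \<and> x$0 < 0 \<and> x$1 = -x$0 \<and> x$2 < x$3 \<and> x$3 < x$4 \<and> x$4 < x$5 \<and> x$4 + x$5 < 1
    \<and> x$2+x$3+x$4+x$5 = 1"
proof -
  have xD: "x \<in> polytopeD" using xi unfolding interior_in_def by blast
  then have D: "x$1 = -x$0" "x$2+x$3+x$4+x$5 = 1" unfolding polytopeD_def by auto
  obtain d1 where d1: "d1>0" "x + d1 *\<^sub>R (axis 1 1 - axis 0 1) \<in> polytopeD" using pert[OF xi, of 1 0] by auto
  obtain d2 where d2: "d2>0" "x + d2 *\<^sub>R (axis 0 1 - axis 1 1) \<in> polytopeD" using pert[OF xi, of 0 1] by auto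
  obtain d3 where d3: "d3>0" "x + d3 *\<^sub>R (axis 2 1 - axis 3 1) \<in> polytopeD" using pert[OF xi, of 2 3] by auto
  obtain d4 where d4: "d4>0" "x + d4 *\<^sub>R (axis 3 1 - axis 4 1) \<in> polytopeD" using pert[OF xi, of 3 4] by auto
  obtain d5 where d5: "d5>0" "x + d5 *\<^sub>R (axis 4 1 - axis 5 1) \<in> polytopeD" using pert[OF xi, of 4 5] by auto
  obtain d6 where d6: "d6>0" "x + d6 *\<^sub>R (axis 4 1 - axis 2 1) \<in> polytopeD" using pert[OF xi, of 4 2] by auto
  have "-1/2 \<le> x$0 - d1" using d1(2) unfolding polytopeD_def axis_def by simp
  moreover have "x$0 + d2 \<le> 0" using d2(2) unfolding polytopeD_def axis_def by simp
  moreover have "x$2 + d3 \<le> x$3 - d3" using d3(2) unfolding polytopeD_def axis_def by simp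
  moreover have "x$3 + d4 \<le> x$4 - d4" using d4(2) unfolding polytopeD_def axis_def by simp
  moreover have "x$4 + d5 \<le> x$5 - d5" using d5(2) unfolding polytopeD_def axis_def by simp
  moreover have "x$4 + d6 + x$5 \<le> 1" using d6(2) unfolding polytopeD_def axis_def by simp
  ultimately show ?thesis using D d1(1) d2(1) d3(1) d4(1) d5(1) d6(1) by linarith
qed

lemma pairs01:
  fixes x :: "real^6"
  assumes "x$2 < x$3" "x$3 < x$4" "x$4 < x$5" "x$4 + x$5 < 1" "x$2+x$3+x$4+x$5 = 1"
    "i \<in> {2,3,4,5}" "j \<in> {2,3,4,5}" "i \<noteq> j"
  shows "0 < x$i + x$j \<and> x$i + x$j < 1"
  using assms by auto

lemma int_small: "(a::real) \<in> \<int> \<Longrightarrow> -1 < a \<Longrightarrow> a < 1 \<Longrightarrow> a = 0"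
  by (elim Ints_cases) auto

lemma perm_sorted:
  fixes x :: "real^6"
  assumes w: "w permutes {2,3,4,5}" and s: "x$2 < x$3" "x$3 < x$4" "x$4 < x$5"
    "x$(w 2) < x$(w 3)" "x$(w 3) < x$(w 4)" "x$(w 4) < x$(w 5)"
  shows "x$(w 2) = x$2 \<and> x$(w 3) = x$3 \<and> x$(w 4) = x$4 \<and> x$(w 5) = x$5"
proof -
  have "w 2 \<in> {2,3,4,5}" "w 3 \<in> {2,3,4,5}" "w 4 \<in> {2,3,4,5}" "w 5 \<in> {2,3,4,5}"
    using permutes_in_image[OF w] by simp_all
  then show ?thesis using s by auto
qed

lemma injG:
  assumes g: "g \<in> groupG" and xi: "x \<in> interior_in setA polytopeD" and yi: "g x \<in> interior_in setA polytopeD"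
  shows "g x = x"
proof -
  obtain e and m :: int and w v where H: "(e = 1 \<or> e = -1)" "w permutes {2,3,4,5}"
     "\<forall>i\<in>{2,3,4,5}. v i - m/2 \<in> \<int>" "v 2 + v 3 + v 4 + v 5 = 0"
     "\<forall>x\<in>setA. (g x)$0 = e * x$0 + m/2 \<and> (g x)$1 = -(e * x$0 + m/2) \<and>
        (\<forall>i\<in>{2,3,4,5}. (g x)$i = x$(w i) + v i)"
    using good_G[OF g] unfolding good_def by blast
  note sx = strict[OF xi] and sy = strict[OF yi]
  have xA: "x \<in> setA" using sx unfolding setA_def by auto
  have gx: "(g x)$0 = e * x$0 + m/2" "(g x)$1 = -(e*x$0 + m/2)"
    "\<forall>i\<in>{2,3,4,5}. (g x)$i = x$(w i) + v i" using H(5) xA by auto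
  have gxi: "(g x)$2 = x$(w 2) + v 2" "(g x)$3 = x$(w 3) + v 3" "(g x)$4 = x$(w 4) + v 4" "(g x)$5 = x$(w 5) + v 5"
    using gx(3) by auto
  have wi: "w 2 \<in> {2,3,4,5}" "w 3 \<in> {2,3,4,5}" "w 4 \<in> {2,3,4,5}" "w 5 \<in> {2,3,4,5}"
    using permutes_in_image[OF H(2)] by simp_all
  have "inj w" by (rule permutes_inj[OF H(2)])
  then have wd: "w 2 \<noteq> w 3" "w 2 \<noteq> w 4" "w 2 \<noteq> w 5" by (simp_all add: inj_eq)
  have par: "v i - m/2 \<in> \<int>" if "i \<in> {2,3,4,5}" for i using H(3) that by blast
  have pint: "v 2 + v j \<in> \<int>" if "j \<in> {2,3,4,5}" for j
  proof -
    have "v 2 + v j = (v 2 - m/2) + (v j - m/2) + of_int m" by (simp add: field_simps)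
    then show ?thesis using par[of 2] par[OF that] by (metis Ints_add Ints_of_int insertI1)
  qed
  have "v 2 + v 3 = 0"
  proof (rule int_small)
    show "v 2 + v 3 \<in> \<int>" by (rule pint) simp
    have "0 < x$(w 2) + x$(w 3) \<and> x$(w 2) + x$(w 3) < 1" using pairs01[of x "w 2" "w 3"] sx wi wd by blast
    moreover have "0 < (g x)$2 + (g x)$3 \<and> (g x)$2 + (g x)$3 < 1" using pairs01[of "g x" 2 3] sy by simp
    ultimately show "-1 < v 2 + v 3" "v 2 + v 3 < 1" using gxi by linarith+
  qed
  moreover have "v 2 + v 4 = 0"
  proof (rule int_small)
    show "v 2 + v 4 \<in> \<int>" by (rule pint) simp
    have "0 < x$(w 2) + x$(w 4) \<and> x$(w 2) + x$(w 4) < 1" using pairs01[of x "w 2" "w 4"] sx wi wd by blast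
    moreover have "0 < (g x)$2 + (g x)$4 \<and> (g x)$2 + (g x)$4 < 1" using pairs01[of "g x" 2 4] sy by simp
    ultimately show "-1 < v 2 + v 4" "v 2 + v 4 < 1" using gxi by linarith+
  qed
  moreover have "v 2 + v 5 = 0"
  proof (rule int_small)
    show "v 2 + v 5 \<in> \<int>" by (rule pint) simp
    have "0 < x$(w 2) + x$(w 5) \<and> x$(w 2) + x$(w 5) < 1" using pairs01[of x "w 2" "w 5"] sx wi wd by blast
    moreover have "0 < (g x)$2 + (g x)$5 \<and> (g x)$2 + (g x)$5 < 1" using pairs01[of "g x" 2 5] sy by simp
    ultimately show "-1 < v 2 + v 5" "v 2 + v 5 < 1" using gxi by linarith+
  qed
  ultimately have v0: "v 2 = 0" "v 3 = 0" "v 4 = 0" "v 5 = 0" using H(4) by linarith+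
  have "- (real_of_int m / 2) \<in> \<int>" using par[of 2] v0 by simp
  then have "real_of_int m / 2 \<in> \<int>" using Ints_minus by fastforce
  then obtain k :: int where k: "real_of_int m / 2 = of_int k" by (elim Ints_cases) auto
  have t: "(g x)$0 = e * x$0 + of_int k" using gx(1) k by simp
  have ee: "e = 1 \<and> k = 0"
  proof (cases "e = 1")
    case True
    then have "-1 < real_of_int k \<and> real_of_int k < 1" using t sx sy by auto
    then have "-1 < k" "k < 1" by simp_all
    then show ?thesis using True by simp
  next
    case False
    then have "e = -1" using H(1) by simp
    then have "-1 < real_of_int k \<and> real_of_int k < 0" using t sx sy by auto
    then have "-1 < k" "k < 0" by simp_all
    then show ?thesis by simp
  qed
  have y0: "(g x)$0 = x$0" using t ee by simp
  have srt: "x$(w 2) = x$2 \<and> x$(w 3) = x$3 \<and> x$(w 4) = x$4 \<and> x$(w 5) = x$5"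
    using perm_sorted[OF H(2), of x] sx sy gxi v0 by simp
  show ?thesis unfolding vec6_eq using y0 sx sy gxi v0 srt by simp
qed

theorem lemma2p3:
  shows "fundamental_domain groupG setA polytopeD"
  unfolding fundamental_domain_def
proof (intro conjI)
  show "polytopeD \<subseteq> setA" unfolding polytopeD_def setA_def by auto
  show "\<forall>x\<in>setA. \<exists>g\<in>groupG. g x \<in> polytopeD" using cover by blast
  show "\<forall>g\<in>groupG. \<forall>x\<in>interior_in setA polytopeD. g x \<in> interior_in setA polytopeD \<longrightarrow> g x = x"
    using injG by blast
qed

end
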